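(* Let $n\ge2$, $d\ge1$, $k\ge1$, let $V\in\mathcal{C}^{k+1}(\mathbb{R}^d,\mathbb{R})$, and let $u:(0,+\infty)\to\mathbb{R}^d$ be a global solution of $\ddot u(r)=-\frac{n-1}{r}\dot u(r)+\nabla V(u(r))$ such that $u(r)\to u_\infty$ as $r\to+\infty$ for some $u_\infty\in\mathbb{R}^d$ with $\nabla V(u_\infty)=0$ and $D^2V(u_\infty)$ positive definite. Then $\dot u(r)\to0$ as $r\to+\infty$. *)

theory Defs
  imports "HOL-Analysis.Analysis"
begin

fun Cm :: "nat \<Rightarrow> ('a::euclidean_space \<Rightarrow> real) \<Rightarrow> bool" where
  "Cm 0 f = continuous_on UNIV f"
| "Cm (Suc m) f = (f differentiable_on UNIV \<and>
      (\<forall>i\<in>Basis. Cm m (\<lambda>x. frechet_derivative f (at x) i)))"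

definition grad :: "('a::euclidean_space \<Rightarrow> real) \<Rightarrow> 'a \<Rightarrow> 'a" where
  "grad V x = (\<Sum>i\<in>Basis. frechet_derivative V (at x) i *\<^sub>R i)"

definition hess :: "('a::euclidean_space \<Rightarrow> real) \<Rightarrow> 'a \<Rightarrow> 'a \<Rightarrow> 'a \<Rightarrow> real" where
  "hess V x h k = frechet_derivative (\<lambda>y. frechet_derivative V (at y) h) (at x) k"

definition pos_def_form :: "('a::real_vector \<Rightarrow> 'a \<Rightarrow> real) \<Rightarrow> bool" where
  "pos_def_form B = (\<forall>h. h \<noteq> 0 \<longrightarrow> B h h > 0)"

end

theory Submission
  imports Defs
begin

lemma Cm_cont: "Cm m f \<Longrightarrow> continuous_on UNIV f"
  by (cases m) (auto intro: differentiable_imp_continuous_on)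

lemma mvt_bound:
  fixes f :: "real \<Rightarrow> 'b::real_normed_vector"
  assumes "a \<le> b" and d: "\<And>x. x \<in> {a..b} \<Longrightarrow> (f has_vector_derivative f' x) (at x)"
    and bnd: "\<And>x. x \<in> {a..b} \<Longrightarrow> norm (f' x) \<le> C"
  shows "norm (f b - f a) \<le> C * (b - a)"
proof (cases "a = b")
  case True then show ?thesis by simp
next
  case False
  then have ab: "a < b" using assms(1) by simp
  have cont: "continuous_on {a..b} f"
    proof (intro continuous_at_imp_continuous_on ballI)
    fix x assume "x \<in> {a..b}"
    then show "isCont f x" using d has_vector_derivative_continuous by blast
  qed
  have "norm (f b - f a) \<le> C * b - C * a"
    by (rule differentiable_bound_general[OF ab cont _ d, of "\<lambda>x. C * x" "\<lambda>_. C"])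
       (auto intro!: continuous_intros derivative_eq_intros bnd simp: has_real_derivative_iff_has_vector_derivative[symmetric])
  then show ?thesis by (simp add: algebra_simps)
qed

theorem lemma2p1:
  fixes n k :: nat and V :: "'a::euclidean_space \<Rightarrow> real"
    and u u' :: "real \<Rightarrow> 'a" and u_inf :: 'a
  assumes "n \<ge> 2" and "k \<ge> 1"
    and "Cm (k + 1) V"
    and "\<And>r. r > 0 \<Longrightarrow> (u has_vector_derivative u' r) (at r)"
    and "\<And>r. r > 0 \<Longrightarrow>
           (u' has_vector_derivative (- ((real n - 1) / r) *\<^sub>R u' r + grad V (u r))) (at r)"
    and "(u \<longlongrightarrow> u_inf) at_top"
    and "grad V u_inf = 0"
    and "pos_def_form (hess V u_inf)"
  shows "(u' \<longlongrightarrow> 0) at_top"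
proof -
  have gc: "continuous_on UNIV (grad V)"
  proof -
    have "\<forall>i\<in>Basis. Cm k (\<lambda>x. frechet_derivative V (at x) i)" using assms(3) by simp
    then have "\<And>i. i \<in> Basis \<Longrightarrow> continuous_on UNIV (\<lambda>x. frechet_derivative V (at x) i)"
      using Cm_cont by blast
    then show ?thesis unfolding grad_def[abs_def]
      by (intro continuous_on_sum continuous_on_scaleR continuous_on_const) auto
  qed
  have gt: "((\<lambda>r. grad V (u r)) \<longlongrightarrow> 0) at_top"
    using isCont_tendsto_compose[OF _ assms(6), of "grad V"] gc assms(7)
    by (simp add: continuous_on_eq_continuous_at)
  define m where "m = n - 1"
  have m1: "m \<ge> 1" and cm: "real n - 1 = real m" using assms(1) by (auto simp: m_def)
  define c where "c = real m"
  have c0: "c \<ge> 0" by (simp add: c_def)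
  define g where "g r = grad V (u r)" for r
  define K :: real where "K = 2^m"
  have K0: "K \<ge> 0" by (simp add: K_def)
  have ud: "\<And>r. r > 0 \<Longrightarrow> (u' has_vector_derivative (- (c / r) *\<^sub>R u' r + g r)) (at r)"
    using assms(5) by (simp add: cm c_def g_def)
  have phid: "((\<lambda>r. r^m *\<^sub>R u' r) has_vector_derivative (x^m *\<^sub>R g x)) (at x)" if x: "x > 0" for x
  proof -
    have "((\<lambda>r. r^m *\<^sub>R u' r) has_vector_derivative
        (x^m *\<^sub>R (- (c / x) *\<^sub>R u' x + g x) + (real m * x^(m - Suc 0)) *\<^sub>R u' x)) (at x)"
      by (rule has_vector_derivative_scaleR[OF DERIV_pow ud[OF x]])
    moreover have "x^m *\<^sub>R (- (c / x) *\<^sub>R u' x + g x) + (real m * x^(m - Suc 0)) *\<^sub>R u' x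
        = x^m *\<^sub>R g x"
    proof -
      have xe: "x^m = x * x^(m - Suc 0)" using m1 by (cases m) auto
      have "x^m * (c / x) = real m * x^(m - Suc 0)" unfolding xe using x by (simp add: c_def)
      then have E: "x ^ m * c / x = real m * x ^ (m - Suc 0)" by simp
      have "x ^ m *\<^sub>R (g x - (c / x) *\<^sub>R u' x) + (real m * x ^ (m - Suc 0)) *\<^sub>R u' x
          = x ^ m *\<^sub>R g x + (real m * x ^ (m - Suc 0) - x ^ m * c / x) *\<^sub>R u' x"
        by (simp add: scaleR_diff_right scaleR_diff_left)
      then show ?thesis using E by simp
    qed
    ultimately show ?thesis by simp
  qed
  have main: "eventually (\<lambda>s. norm (u' s) < e) at_top" if e: "e > 0" for e
  proof -
    define \<epsilon> where "\<epsilon> = e / (2 * (K + 2))"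
    define \<eta> where "\<eta> = e / 8"
    have eps0: "\<epsilon> > 0" using e K0 by (simp add: \<epsilon>_def)
    have eta0: "\<eta> > 0" using e by (simp add: \<eta>_def)
    from gt eps0 have "eventually (\<lambda>r. norm (g r) < \<epsilon>) at_top"
      unfolding g_def by (auto simp: tendsto_iff dist_norm)
    then obtain R1 where R1: "\<And>r. r \<ge> R1 \<Longrightarrow> norm (g r) < \<epsilon>" by (auto simp: eventually_at_top_linorder)
    from assms(6) eta0 have "eventually (\<lambda>r. norm (u r - u_inf) < \<eta>) at_top"
      by (auto simp: tendsto_iff dist_norm)
    then obtain R2 where R2: "\<And>r. r \<ge> R2 \<Longrightarrow> norm (u r - u_inf) < \<eta>" by (auto simp: eventually_at_top_linorder)
    have "norm (u' s) < e" if s: "s \<ge> max (max R1 R2) (max 1 (2 * c))" for s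
    proof -
      define A where "A = norm (u' s)"
      have s1: "s \<ge> 1" and sR1: "s \<ge> R1" and sR2: "s \<ge> R2" and s2c: "s \<ge> 2 * c" using s by auto
      have gb: "norm (g x) \<le> \<epsilon>" if "x \<in> {s..s+1}" for x using R1[of x] that sR1 by auto
      have wb: "norm (u' t) \<le> A + K * \<epsilon>" if t: "t \<in> {s..s+1}" for t
      proof -
        have "norm (t^m *\<^sub>R u' t - s^m *\<^sub>R u' s) \<le> ((s+1)^m * \<epsilon>) * (t - s)"
        proof (rule mvt_bound)
          show "s \<le> t" using t by simp
          show "((\<lambda>r. r^m *\<^sub>R u' r) has_vector_derivative (x^m *\<^sub>R g x)) (at x)" if "x \<in> {s..t}" for x
            using phid[of x] that s1 by simp
          show "norm (x^m *\<^sub>R g x) \<le> (s+1)^m * \<epsilon>" if "x \<in> {s..t}" for x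
          proof -
            have "norm (x^m *\<^sub>R g x) = x^m * norm (g x)" using that s1 by simp
            also have "\<dots> \<le> (s+1)^m * \<epsilon>"
              using that t s1 gb[of x] by (intro mult_mono power_mono) auto
            finally show ?thesis .
          qed
        qed
        also have "\<dots> \<le> (s+1)^m * \<epsilon>" using t eps0 s1 by (intro mult_left_le) auto
        finally have "norm (t^m *\<^sub>R u' t) \<le> norm (s^m *\<^sub>R u' s) + (s+1)^m * \<epsilon>"
          by (smt (verit) norm_triangle_ineq2)
        also have "\<dots> = s^m * A + (s+1)^m * \<epsilon>" using s1 by (simp add: A_def)
        also have "\<dots> \<le> t^m * A + (2*t)^m * \<epsilon>"
          using t s1 eps0 by (intro add_mono mult_right_mono power_mono) (auto simp: A_def)
        also have "\<dots> = t^m * (A + K * \<epsilon>)" by (simp add: K_def power_mult_distrib algebra_simps)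
        finally have "t^m * norm (u' t) \<le> t^m * (A + K * \<epsilon>)" using t s1 by simp
        moreover have "t^m > 0" using t s1 by simp
        ultimately show ?thesis by simp
      qed
      define B where "B = (c / s) * (A + K * \<epsilon>) + \<epsilon>"
      have w'b: "norm (- (c / x) *\<^sub>R u' x + g x) \<le> B" if x: "x \<in> {s..s+1}" for x
      proof -
        have "norm (- (c / x) *\<^sub>R u' x + g x) \<le> (c / x) * norm (u' x) + norm (g x)"
        proof -
          have "norm (- (c / x) *\<^sub>R u' x) = (c / x) * norm (u' x)" using x s1 c0 by simp
          then show ?thesis using norm_triangle_ineq[of "- (c / x) *\<^sub>R u' x" "g x"] by linarith
        qed
        also have "\<dots> \<le> (c / s) * (A + K * \<epsilon>) + \<epsilon>"
        proof -
          have cx: "c / x \<le> c / s" using x s1 c0 by (intro divide_left_mono) auto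
          have "(c / x) * norm (u' x) \<le> (c / s) * (A + K * \<epsilon>)"
            using x s1 c0 wb[OF x] cx by (intro mult_mono) auto
          then show ?thesis using gb[OF x] by linarith
        qed
        finally show ?thesis by (simp add: B_def)
      qed
      have B0: "B \<ge> 0" using c0 s1 K0 eps0 by (simp add: B_def A_def)
      have wdiff: "norm (u' x - u' s) \<le> B" if x: "x \<in> {s..s+1}" for x
      proof -
        have "norm (u' x - u' s) \<le> B * (x - s)"
          by (rule mvt_bound[where f' = "\<lambda>x. - (c / x) *\<^sub>R u' x + g x"]) (use x s1 ud w'b in auto)
        also have "\<dots> \<le> B" using x B0 by (intro mult_left_le) auto
        finally show ?thesis .
      qed
      have "norm ((u (s+1) - (s+1) *\<^sub>R u' s) - (u s - s *\<^sub>R u' s)) \<le> B * ((s+1) - s)"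
      proof (rule mvt_bound[where f = "\<lambda>x. u x - x *\<^sub>R u' s" and f' = "\<lambda>x. u' x - u' s"])
        show "((\<lambda>x. u x - x *\<^sub>R u' s) has_vector_derivative u' x - u' s) (at x)" if "x \<in> {s..s+1}" for x
          using that s1 by (auto intro!: derivative_eq_intros assms(4))
      qed (use wdiff in auto)
      then have "norm (u (s+1) - u s - u' s) \<le> B" by (simp add: algebra_simps)
      moreover have "norm (u (s+1) - u s) < 2 * \<eta>"
        using R2[of s] R2[of "s+1"] sR2 norm_triangle_ineq4[of "u (s+1) - u_inf" "u s - u_inf"] by auto
      ultimately have AB: "A < 2 * \<eta> + B" unfolding A_def
        by (smt (verit) norm_triangle_ineq2 norm_minus_commute)
      have "c / s \<le> 1/2" using s2c s1 by (simp add: field_simps)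
      then have h: "(c / s) * (A + K * \<epsilon>) \<le> (1/2) * (A + K * \<epsilon>)"
        using K0 eps0 by (intro mult_right_mono) (auto simp: A_def)
      have AB': "A < 2 * \<eta> + (c / s) * (A + K * \<epsilon>) + \<epsilon>" using AB by (simp add: B_def)
      have "A < 4 * \<eta> + (K + 2) * \<epsilon>" using AB' h by (simp add: algebra_simps del: times_divide_eq_left times_divide_eq_right)
      also have "\<dots> = e" using K0 by (simp add: \<eta>_def \<epsilon>_def field_simps)
      finally show ?thesis by (simp add: A_def)
    qed
    then show ?thesis unfolding eventually_at_top_linorder by blast
  qed
  show ?thesis using main by (auto simp: tendsto_iff dist_norm)
qed

end
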